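(* Let $\Omega_c=\bigcup_{j\in\mathbb N}[a_j,b_j]$ with $(a_j)$ unbounded and $0=a_1<b_1\le a_2<b_2\le\cdots$, let $(k_j)_{j\in\mathbb N}\subset\mathbb R_{>0}$ be bounded, $k_B=\sum_jk_j\chi_{[a_j,b_j]}$, and for $L>0$ let $$\mathcal T^\varphi_{\Omega_L}(t)x^0=\exp\Big(-\frac1c\int_{\cdot-ct}^{\cdot}P_{\Omega_L}(k_B|_{[0,L]})(y)\,dy\Big)P_{\Omega_L}(x^0)(\cdot-ct),\qquad x^0\in L^2(\Omega_L),\ t\ge0,$$ be the closed-loop semigroup on $L^2(\Omega_L)$. The following are equivalent: (i) There exist $\tilde M,\tilde k>0$ with $\|\mathcal T^\varphi_{\Omega_L}(t)\|_{L(L^2(\Omega_L))}\le\tilde Me^{-\tilde kt}$ for all $L>0$ and $t\ge0$. (ii) There exist $M,k>0$ such that for all $n,m\in\mathbb N$ with $n\ge m$: $k(a_n-b_m)-\sum_{j=m+1}^{n-1}k_j(b_j-a_j)\le M$.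
   Context: $c>0$ constant, $\Omega_L=[0,L]$. $P_{\Omega_L}(f)$ denotes the $L$-periodic extension to $\mathbb R$ of a function $f$ on $[0,L]$ ($P_{\Omega_L}(f)(\omega)=f(\omega-jL)$ for $\omega\in(jL,(j+1)L]$, $j\in\mathbb Z$). $\mathcal T^\varphi_{\Omega_L}$ is the semigroup of the transport equation $\partial_tx=-k_Bx-c\partial_\omega x$ on $[0,L]$ with periodic boundary condition $x(0,t)=x(L,t)$. *)

theory Defs
  imports "HOL-Analysis.Analysis"
begin

definition kB :: "(nat \<Rightarrow> real) \<Rightarrow> (nat \<Rightarrow> real) \<Rightarrow> (nat \<Rightarrow> real) \<Rightarrow> real \<Rightarrow> real" where
  "kB a b kk \<omega> = (\<Sum>j. kk (Suc j) * indicator {a (Suc j)..b (Suc j)} \<omega>)"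

text \<open>L-periodic extension: P f w = f (w - jL) for w in (jL,(j+1)L].\<close>
definition per_ext :: "real \<Rightarrow> (real \<Rightarrow> real) \<Rightarrow> real \<Rightarrow> real" where
  "per_ext L f \<omega> = f (\<omega> - real_of_int (\<lceil>\<omega> / L\<rceil> - 1) * L)"

definition Tsg :: "real \<Rightarrow> (real \<Rightarrow> real) \<Rightarrow> real \<Rightarrow> real \<Rightarrow> (real \<Rightarrow> real) \<Rightarrow> real \<Rightarrow> real" where
  "Tsg c k L t x0 \<omega> =
     exp (- (1 / c) * integral {\<omega> - c * t..\<omega>} (per_ext L (\<lambda>y. if y \<in> {0..L} then k y else 0)))
     * per_ext L x0 (\<omega> - c * t)"

definition L2_on :: "real \<Rightarrow> (real \<Rightarrow> real) set" where
  "L2_on L = {x. x \<in> borel_measurable (lebesgue_on {0..L}) \<and>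
                 integrable (lebesgue_on {0..L}) (\<lambda>\<omega>. (x \<omega>)\<^sup>2)}"

definition L2_norm_on :: "real \<Rightarrow> (real \<Rightarrow> real) \<Rightarrow> real" where
  "L2_norm_on L x = sqrt (LINT \<omega>|lebesgue_on {0..L}. (x \<omega>)\<^sup>2)"

end

theory Submission
  imports Defs
begin



definition ov :: "real \<Rightarrow> real \<Rightarrow> real \<Rightarrow> real \<Rightarrow> real" where
  "ov x y s t = max 0 (min y t - max x s)"

locale seqs =
  fixes a b kk :: "nat \<Rightarrow> real"
  assumes a1: "a 1 = 0"
    and ab: "\<And>j. j \<ge> 1 \<Longrightarrow> a j < b j"
    and ba: "\<And>j. j \<ge> 1 \<Longrightarrow> b j \<le> a (Suc j)"
    and a_unbdd: "\<not> bdd_above {a j | j. j \<ge> 1}"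
    and kk_pos: "\<And>j. j \<ge> 1 \<Longrightarrow> kk j > 0"
begin

lemma a_step: "j \<ge> 1 \<Longrightarrow> a j < a (Suc j)"
  using ab ba by (meson order_less_le_trans)

lemma a_mono_lt: "1 \<le> i \<Longrightarrow> i < j \<Longrightarrow> a i < a j"
proof (induction j)
  case 0 then show ?case by simp
next
  case (Suc j)
  show ?case
  proof (cases "i = j")
    case True then show ?thesis using a_step Suc.prems by simp
  next
    case False
    then have "a i < a j" using Suc by simp
    also have "a j < a (Suc j)" using a_step Suc.prems False by simp
    finally show ?thesis .
  qed
qed

lemma a_mono_le: "1 \<le> i \<Longrightarrow> i \<le> j \<Longrightarrow> a i \<le> a j"
  using a_mono_lt[of i j] by (cases "i = j") auto

lemma b_le_a: "1 \<le> i \<Longrightarrow> i < j \<Longrightarrow> b i \<le> a j"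
proof -
  assume "1 \<le> i" "i < j"
  then have "b i \<le> a (Suc i)" "a (Suc i) \<le> a j" using ba a_mono_le[of "Suc i" j] by auto
  then show ?thesis by simp
qed

lemma a_nonneg: "j \<ge> 1 \<Longrightarrow> a j \<ge> 0"
  using a_mono_le[of 1 j] a1 by simp

lemma exists_big: "\<exists>j\<ge>1. a j > T"
proof (rule ccontr)
  assume "\<not> ?thesis"
  then have "bdd_above {a j | j. j \<ge> 1}" unfolding bdd_above_def
    by (intro exI[of _ T]) (auto simp: not_less)
  then show False using a_unbdd by simp
qed

lemma locate:
  assumes "t \<ge> 0"
  shows "\<exists>n\<ge>1. a n \<le> t \<and> t < a (Suc n)"
proof -
  define P where "P = (\<lambda>j. j \<ge> 1 \<and> a j > t)"
  define J where "J = (LEAST j. P j)"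
  have "\<exists>j. P j" using exists_big[of t] unfolding P_def by blast
  then have J: "P J" unfolding J_def by (rule LeastI_ex)
  have J2: "J \<ge> 2" using J a1 assms unfolding P_def by (cases "J = 1") auto
  have "\<not> P (J - 1)"
  proof
    assume "P (J - 1)"
    then have "J \<le> J - 1" unfolding J_def by (rule Least_le)
    then show False using J2 by simp
  qed
  then have "a (J - 1) \<le> t" using J2 unfolding P_def by auto
  moreover have "Suc (J - 1) = J" using J2 by auto
  ultimately show ?thesis using J J2 unfolding P_def
    by (intro exI[of _ "J - 1"]) auto
qed

lemma kB_sum:
  assumes "\<omega> < a (Suc N)"
  shows "kB a b kk \<omega> = (\<Sum>j=1..N. kk j * indicator {a j..b j} \<omega>)"
proof -
  have "kB a b kk \<omega> = (\<Sum>j\<in>{..<N}. kk (Suc j) * indicator {a (Suc j)..b (Suc j)} \<omega>)"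
    unfolding kB_def
  proof (rule suminf_finite)
    show "finite {..<N}" by simp
    fix j assume "j \<notin> {..<N}"
    then have "N \<le> j" by simp
    then have "a (Suc N) \<le> a (Suc j)" using a_mono_le by simp
    then show "kk (Suc j) * indicator {a (Suc j)..b (Suc j)} \<omega> = 0" using assms by auto
  qed
  also have "\<dots> = (\<Sum>j=1..N. kk j * indicator {a j..b j} \<omega>)"
    using sum.shift_bounds_Suc_ivl[of "\<lambda>j. kk j * indicator {a j..b j} \<omega>" 0 N]
    by (simp add: lessThan_atLeast0 atLeastLessThanSuc_atLeastAtMost)
  finally show ?thesis .
qed

end



lemma ind_has_int: "(indicat_real {x..y} has_integral ov x y s t) {s..t}"
proof -
  have "((\<lambda>_. 1::real) has_integral Henstock_Kurzweil_Integration.content {max x s..min y t}) {max x s..min y t}"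
    using has_integral_const_real[of "1::real" "max x s" "min y t"] by simp
  then have "((\<lambda>_. 1::real) has_integral Henstock_Kurzweil_Integration.content {max x s..min y t}) ({x..y} \<inter> {s..t})"
    by (simp only: Int_atLeastAtMost)
  then have "((\<lambda>z. if z \<in> {x..y} then 1::real else 0) has_integral Henstock_Kurzweil_Integration.content {max x s..min y t}) {s..t}"
    by (simp only: has_integral_restrict_Int)
  moreover have c: "Henstock_Kurzweil_Integration.content {max x s..min y t} = ov x y s t"
    unfolding ov_def by (auto simp add: content_real_if max_def min_def)
  moreover have eq: "indicat_real {x..y} = (\<lambda>z. if z \<in> {x..y} then 1::real else 0)"
    by (auto simp: fun_eq_iff indicator_def)
  ultimately show ?thesis by (simp only: eq c)
qed

context seqs begin

lemma kB_has_int: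
  assumes "t < a (Suc N)"
  shows "(kB a b kk has_integral (\<Sum>j=1..N. kk j * ov (a j) (b j) s t)) {s..t}"
proof -
  have "((\<lambda>\<omega>. \<Sum>j=1..N. kk j * indicator {a j..b j} \<omega>) has_integral (\<Sum>j=1..N. kk j * ov (a j) (b j) s t)) {s..t}"
    by (intro has_integral_sum has_integral_mult_right ind_has_int) auto
  then show ?thesis
  proof (rule has_integral_eq[rotated])
    fix x assume "x \<in> {s..t}"
    then have "x < a (Suc N)" using assms by simp
    then show "(\<Sum>j=1..N. kk j * indicator {a j..b j} x) = kB a b kk x" by (rule kB_sum[symmetric])
  qed
qed

lemma kB_int:
  assumes "t < a (Suc N)"
  shows "integral {s..t} (kB a b kk) = (\<Sum>j=1..N. kk j * ov (a j) (b j) s t)"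
    and "kB a b kk integrable_on {s..t}"
  using kB_has_int[OF assms] by (auto simp: integral_unique integrable_on_def)

lemma kB_integrable: "kB a b kk integrable_on {s..t}"
proof -
  obtain N where "N \<ge> 1" "a N > t" using exists_big by blast
  then have "t < a (Suc N)" using a_step[of N] by simp
  then show ?thesis using kB_int by blast
qed

lemma kB_nonneg: "kB a b kk \<omega> \<ge> 0"
proof -
  obtain N where "N \<ge> 1" "a N > \<omega>" using exists_big by blast
  then have "\<omega> < a (Suc N)" using a_step[of N] by simp
  then have "kB a b kk \<omega> = (\<Sum>j=1..N. kk j * indicator {a j..b j} \<omega>)" by (rule kB_sum)
  also have "\<dots> \<ge> 0" using kk_pos by (intro sum_nonneg mult_nonneg_nonneg) (auto simp: less_imp_le)
  finally show ?thesis .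
qed

end



lemma split3:
  fixes f :: "nat \<Rightarrow> real"
  assumes "1 \<le> m" "m < n"
  shows "sum f {1..n} = sum f {1..<m} + f m + sum f {m+1..n-1} + f n"
proof -
  have "sum f {1..n} = sum f {1..<Suc n}" by (simp add: atLeastLessThanSuc_atLeastAtMost)
  also have "\<dots> = sum f {1..<m} + sum f {m..<Suc n}"
    using assms by (intro sum.atLeastLessThan_concat[symmetric]) auto
  also have "sum f {m..<Suc n} = f m + sum f {Suc m..<Suc n}"
    using assms by (intro sum.atLeast_Suc_lessThan) auto
  also have "sum f {Suc m..<Suc n} = sum f {Suc m..<n} + f n"
    using assms by simp
  also have "{Suc m..<n} = {m+1..n-1}" using assms by auto
  finally show ?thesis by simp
qed

lemma prod_aux:
  fixes k \<kappa> x l C :: real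
  assumes "0 \<le> x" "x \<le> l" "(\<kappa> - k) * l \<le> C" "0 \<le> C"
  shows "(k - \<kappa>) * x \<ge> - C"
proof (cases "k \<ge> \<kappa>")
  case True then show ?thesis using assms by (simp add: mult_nonneg_nonneg order_trans[of "-C" 0])
next
  case False
  then have "(\<kappa> - k) * x \<le> (\<kappa> - k) * l" using assms by (intro mult_left_mono) auto
  then show ?thesis using assms by (simp add: algebra_simps)
qed

context seqs begin

lemma kB_int_upper:
  assumes "1 \<le> m" "m < n" "0 < \<delta>" "\<delta> \<le> b m - a m"
  shows "integral {b m - \<delta>..a n} (kB a b kk) = kk m * \<delta> + (\<Sum>j\<in>{m+1..n-1}. kk j * (b j - a j))"
proof -
  have n1: "a n < a (Suc n)" using assms a_step by simp
  have "integral {b m - \<delta>..a n} (kB a b kk) = (\<Sum>j=1..n. kk j * ov (a j) (b j) (b m - \<delta>) (a n))"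
    using kB_int(1)[OF n1] .
  also have "\<dots> = (\<Sum>j\<in>{1..<m}. kk j * ov (a j) (b j) (b m - \<delta>) (a n)) + kk m * ov (a m) (b m) (b m - \<delta>) (a n)
      + (\<Sum>j\<in>{m+1..n-1}. kk j * ov (a j) (b j) (b m - \<delta>) (a n)) + kk n * ov (a n) (b n) (b m - \<delta>) (a n)"
    by (rule split3[OF assms(1,2)])
  also have "(\<Sum>j\<in>{1..<m}. kk j * ov (a j) (b j) (b m - \<delta>) (a n)) = 0"
  proof (intro sum.neutral ballI)
    fix j assume j: "j \<in> {1..<m}"
    then have "b j \<le> a m" using b_le_a by auto
    then show "kk j * ov (a j) (b j) (b m - \<delta>) (a n) = 0" using assms unfolding ov_def by auto
  qed
  also have "ov (a m) (b m) (b m - \<delta>) (a n) = \<delta>"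
    using assms b_le_a[of m n] unfolding ov_def by auto
  also have "ov (a n) (b n) (b m - \<delta>) (a n) = 0"
    using assms ab[of n] b_le_a[of m n] unfolding ov_def by auto
  also have "(\<Sum>j\<in>{m+1..n-1}. kk j * ov (a j) (b j) (b m - \<delta>) (a n)) = (\<Sum>j\<in>{m+1..n-1}. kk j * (b j - a j))"
  proof (intro sum.cong refl)
    fix j assume j: "j \<in> {m+1..n-1}"
    then have "b m \<le> a j" "b j \<le> a n" "a j < b j" using b_le_a ab assms by auto
    then show "kk j * ov (a j) (b j) (b m - \<delta>) (a n) = kk j * (b j - a j)"
      using assms unfolding ov_def by auto
  qed
  finally show ?thesis by simp
qed

context
  fixes \<kappa> M :: real
  assumes kpos: "\<kappa> > 0" and Mpos: "M > 0"
    and cond: "\<forall>n m. 1 \<le> m \<and> m \<le> n \<longrightarrow> \<kappa> * (a n - b m) - (\<Sum>j\<in>{m+1..n-1}. kk j * (b j - a j)) \<le> M"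
begin

lemma gap_bd: "j \<ge> 1 \<Longrightarrow> \<kappa> * (a (Suc j) - b j) \<le> M"
  using cond[rule_format, of j "Suc j"] by simp

lemma C0_bd: "j \<ge> 1 \<Longrightarrow> (\<kappa> - kk j) * (b j - a j) \<le> M + \<kappa> * b 1"
proof -
  assume j: "j \<ge> 1"
  show ?thesis
  proof (cases "j = 1")
    case True
    have "(\<kappa> - kk 1) * (b 1 - a 1) \<le> \<kappa> * (b 1 - a 1)"
      using kk_pos[of 1] ab[of 1] by (intro mult_right_mono) auto
    then show ?thesis using True a1 Mpos by simp
  next
    case False
    then have j2: "j \<ge> 2" using j by simp
    have "\<kappa> * (a (j+1) - b (j-1)) - (\<Sum>i\<in>{j-1+1..j+1-1}. kk i * (b i - a i)) \<le> M"
    proof -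
      have "1 \<le> j - 1 \<and> j - 1 \<le> j + 1" using j2 by linarith
      then show ?thesis using cond[rule_format, of "j-1" "j+1"] j2 by (simp del: One_nat_def)
    qed
    moreover have "{j-1+1..j+1-1} = {j}" using j2 by auto
    moreover have "b j - a j \<le> a (j+1) - b (j-1)"
    proof -
      have e: "Suc (j-1) = j" and j1: "1 \<le> j - 1" using j2 by linarith+
      from ba[OF j1] e have "b (j-1) \<le> a j" by simp
      then show ?thesis using ba[of j] j2 by simp
    qed
    moreover have "\<kappa> * (b j - a j) \<le> \<kappa> * (a (j+1) - b (j-1))"
      using calculation(3) kpos by (intro mult_left_mono) auto
    ultimately have "(\<kappa> - kk j) * (b j - a j) \<le> M" by (simp add: algebra_simps)
    moreover have "\<kappa> * b 1 \<ge> 0" using kpos ab[of 1] a1 by simp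
    ultimately show ?thesis by linarith
  qed
qed

definition "C0 = M + \<kappa> * b 1"
definition "Clow = 2 * C0 + 2 * M"

lemma C0_nonneg: "C0 \<ge> 0"
  using kpos ab[of 1] a1 Mpos unfolding C0_def by simp

lemma kB_int_lower:
  assumes "0 \<le> s" "s \<le> t"
  shows "integral {s..t} (kB a b kk) \<ge> \<kappa> * (t - s) - Clow"
proof -
  obtain m where m: "m \<ge> 1" "a m \<le> s" "s < a (Suc m)" using locate assms by blast
  have t0: "0 \<le> t" using assms by simp
  obtain n where n: "n \<ge> 1" "a n \<le> t" "t < a (Suc n)" using locate[OF t0] by blast
  have mn: "m \<le> n"
  proof (rule ccontr)
    assume "\<not> m \<le> n"
    then have "a (Suc n) \<le> a m" using a_mono_le n by simp
    then show False using m n assms by simp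
  qed
  define f where "f j = kk j * ov (a j) (b j) s t" for j
  have fnn: "f j \<ge> 0" if "j \<ge> 1" for j
    unfolding f_def ov_def using kk_pos[OF that] by simp
  have I: "integral {s..t} (kB a b kk) = sum f {1..n}"
    unfolding f_def using kB_int(1)[OF n(3)] .
  have C0: "\<And>j. j \<ge> 1 \<Longrightarrow> (\<kappa> - kk j) * (b j - a j) \<le> C0"
    using C0_bd unfolding C0_def .
  note gap = gap_bd
  show ?thesis
  proof (cases "m = n")
    case True
    have "f n \<le> sum f {1..n}" using fnn n by (intro member_le_sum) auto
    moreover have "f n - \<kappa> * (t - s) \<ge> - C0 - M"
    proof -
      have gapn: "\<kappa> * (a (Suc n) - b n) \<le> M" using gap n by simp
      have abn: "a n < b n" using ab n by simp
      consider "t \<le> b n" | "b n \<le> s" | "s < b n" "b n < t" by linarith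
      then show ?thesis
      proof cases
        case 1
        then have "f n = kk n * (t - s)" unfolding f_def ov_def using True m assms by auto
        moreover have "(kk n - \<kappa>) * (t - s) \<ge> - C0"
          using prod_aux[of "t - s" "b n - a n" \<kappa> "kk n" C0] C0[OF n(1)] C0_nonneg 1 True m assms by simp
        ultimately show ?thesis using Mpos by (simp add: algebra_simps)
      next
        case 2
        have "\<kappa> * (t - s) \<le> \<kappa> * (a (Suc n) - b n)" using kpos 2 n by (intro mult_left_mono) auto
        moreover have "f n \<ge> 0" using fnn n by simp
        ultimately show ?thesis using gapn C0_nonneg by linarith
      next
        case 3
        then have "f n = kk n * (b n - s)" unfolding f_def ov_def using True m assms by auto
        moreover have "(kk n - \<kappa>) * (b n - s) \<ge> - C0"
          using prod_aux[of "b n - s" "b n - a n" \<kappa> "kk n" C0] C0[OF n(1)] C0_nonneg 3 True m assms by simp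
        moreover have "\<kappa> * (t - b n) \<le> \<kappa> * (a (Suc n) - b n)" using kpos 3 n by (intro mult_left_mono) auto
        ultimately show ?thesis using gapn by (simp add: algebra_simps)
      qed
    qed
    ultimately show ?thesis using I Mpos C0_nonneg unfolding Clow_def by linarith
  next
    case False
    then have mn': "m < n" using mn by simp
    have split: "sum f {1..n} = sum f {1..<m} + f m + sum f {m+1..n-1} + f n"
      by (rule split3[OF m(1) mn'])
    have s1: "sum f {1..<m} \<ge> 0" using fnn by (intro sum_nonneg) auto
    have mid: "sum f {m+1..n-1} = (\<Sum>j\<in>{m+1..n-1}. kk j * (b j - a j))"
    proof (intro sum.cong refl)
      fix j assume j: "j \<in> {m+1..n-1}"
      then have "a (Suc m) \<le> a j" "b j \<le> a n" "a j < b j" using b_le_a ab a_mono_le m by auto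
      then show "f j = kk j * (b j - a j)"
        using m n unfolding f_def ov_def by auto
    qed
    have cnd: "\<kappa> * (a n - b m) - (\<Sum>j\<in>{m+1..n-1}. kk j * (b j - a j)) \<le> M"
      using cond mn m by blast
    have bmn: "b m \<le> a n" using b_le_a m mn' by simp
    have asm: "a (Suc m) \<le> a n" using a_mono_le m mn' by simp
    have fm: "f m - \<kappa> * (b m - s) \<ge> - C0"
    proof (cases "b m \<le> s")
      case True
      have "f m \<ge> 0" using fnn m by simp
      moreover have "\<kappa> * (b m - s) \<le> 0" using True kpos by (simp add: mult_nonneg_nonpos)
      ultimately show ?thesis using C0_nonneg by linarith
    next
      case False
      then have "f m = kk m * (b m - s)" unfolding f_def ov_def using m n bmn assms by auto
      moreover have "(kk m - \<kappa>) * (b m - s) \<ge> - C0"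
        using prod_aux[of "b m - s" "b m - a m" \<kappa> "kk m" C0] C0[OF m(1)] C0_nonneg False m by simp
      ultimately show ?thesis by (simp add: algebra_simps)
    qed
    have fn: "f n - \<kappa> * (t - a n) \<ge> - C0 - M"
    proof (cases "t \<le> b n")
      case True
      then have "f n = kk n * (t - a n)" unfolding f_def ov_def using m n asm assms by auto
      moreover have "(kk n - \<kappa>) * (t - a n) \<ge> - C0"
        using prod_aux[of "t - a n" "b n - a n" \<kappa> "kk n" C0] C0[OF n(1)] C0_nonneg True n by simp
      ultimately show ?thesis using Mpos by (simp add: algebra_simps)
    next
      case False
      have abn: "a n < b n" using ab n by simp
      then have "f n = kk n * (b n - a n)" unfolding f_def ov_def using m n asm assms False by auto
      moreover have "(kk n - \<kappa>) * (b n - a n) \<ge> - C0"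
        using prod_aux[of "b n - a n" "b n - a n" \<kappa> "kk n" C0] C0[OF n(1)] C0_nonneg abn by simp
      moreover have "\<kappa> * (t - b n) \<le> \<kappa> * (a (Suc n) - b n)" using kpos False n by (intro mult_left_mono) auto
      moreover have "\<kappa> * (a (Suc n) - b n) \<le> M" using gap n by simp
      ultimately show ?thesis by (simp add: algebra_simps)
    qed
    have "\<kappa> * (t - s) = \<kappa> * (b m - s) + \<kappa> * (a n - b m) + \<kappa> * (t - a n)" by (simp add: algebra_simps)
    then show ?thesis using I split s1 mid cnd fm fn unfolding Clow_def by linarith
  qed
qed

end
end



lemma per_ext_periodic:
  assumes "L > 0"
  shows "per_ext L f (x + of_int p * L) = per_ext L f x"
proof -
  have "(x + of_int p * L) / L = x / L + of_int p" using assms by (simp add: field_simps)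
  then have "\<lceil>(x + of_int p * L) / L\<rceil> = \<lceil>x / L\<rceil> + p" by simp
  then show ?thesis unfolding per_ext_def by (simp add: algebra_simps)
qed

lemma per_ext_base:
  assumes "L > 0" "0 < x" "x \<le> L"
  shows "per_ext L f x = f x"
proof -
  have "0 < x / L" "x / L \<le> 1" using assms by (auto simp: field_simps)
  then have "\<lceil>x / L\<rceil> = 1" by (simp add: ceiling_eq_iff)
  then show ?thesis unfolding per_ext_def by simp
qed

lemma shift_integral:
  fixes K :: "real \<Rightarrow> real"
  assumes per: "\<And>x. K (x + c) = K x"
  shows "integral {x + c..y + c} K = integral {x..y} K"
proof -
  have "integral {(x + c) - c..(y + c) - c} (\<lambda>z. K (z + c)) = integral {x + c..y + c} K"
    by (rule integral_shift_real_ivl)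
  then show ?thesis using per by simp
qed

lemma shift_integrable:
  fixes K :: "real \<Rightarrow> real"
  assumes per: "\<And>x. K (x + c) = K x" and "K integrable_on {x..y}"
  shows "K integrable_on {x - c..y - c}"
  using integrable_shift_real_ivl[OF assms(2), of c] per by simp

context
  fixes K :: "real \<Rightarrow> real" and L :: real
  assumes Lpos: "L > 0"
    and per: "\<And>x p. K (x + of_int p * L) = K x"
    and int0: "K integrable_on {0..L}"
begin

lemma per_int_block: "K integrable_on {of_int p * L..of_int p * L + real n * L}"
proof (induction n)
  case 0 then show ?case using integrable_on_refl[of K "real_of_int p * L"] by simp
next
  case (Suc n)
  have "K integrable_on {0 - (- of_int (p + int n) * L)..L - (- of_int (p + int n) * L)}"
    using per[of _ "- (p + int n)"] by (intro shift_integrable int0) simp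
  then have blk: "K integrable_on {of_int p * L + real n * L..of_int p * L + real (Suc n) * L}"
    by (simp add: algebra_simps)
  show ?case
    by (rule Henstock_Kurzweil_Integration.integrable_combine[OF _ _ Suc.IH blk]) (use Lpos in auto)
qed

lemma per_integrable: "K integrable_on {x..y}"
proof (cases "x \<le> y")
  case False then show ?thesis by auto
next
  case True
  define p where "p = \<lfloor>x / L\<rfloor>"
  define n where "n = nat (\<lceil>y / L\<rceil> - p)"
  have "of_int p * L \<le> x" unfolding p_def using Lpos
    by (metis floor_divide_lower)
  moreover have "y \<le> of_int p * L + real n * L"
  proof -
    have "y / L \<le> of_int \<lceil>y / L\<rceil>" by (rule le_of_int_ceiling)
    moreover have "of_int \<lceil>y / L\<rceil> \<le> of_int p + real n" unfolding n_def by simp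
    ultimately have "y / L \<le> of_int p + real n" by linarith
    then show ?thesis using Lpos by (simp add: field_simps)
  qed
  ultimately show ?thesis
    by (intro integrable_subinterval_real[OF per_int_block[of p n]]) auto
qed

lemma per_shift_int: "integral {x + of_int p * L..y + of_int p * L} K = integral {x..y} K"
  by (rule shift_integral) (rule per)

context
  fixes \<kappa>1 \<kappa>2 \<kappa>3 C :: real
  assumes A: "\<And>s t. 0 \<le> s \<Longrightarrow> s \<le> t \<Longrightarrow> t \<le> L \<Longrightarrow> integral {s..t} K \<ge> \<kappa>1 * (t - s) - C"
    and B: "integral {0..L} K \<ge> \<kappa>2 * L"
    and k31: "\<kappa>3 \<le> \<kappa>1" and k32: "\<kappa>3 \<le> \<kappa>2"
begin

lemma per_Q: "0 \<le> u \<Longrightarrow> u \<le> L \<Longrightarrow> integral {u..real (Suc q) * L} K \<ge> \<kappa>3 * (real (Suc q) * L - u) - C"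
proof (induction q)
  case 0
  have "\<kappa>3 * (L - u) \<le> \<kappa>1 * (L - u)" using 0 k31 by (intro mult_right_mono) auto
  then show ?case using A[of u L] 0 by simp
next
  case (Suc q)
  have "0 \<le> real q * L" using Lpos by simp
  moreover have "real (Suc q) * L = L + real q * L" by (simp add: distrib_right)
  ultimately have uq: "u \<le> real (Suc q) * L" using Suc.prems by linarith
  have c: "integral {u..real (Suc q) * L} K + integral {real (Suc q) * L..real (Suc (Suc q)) * L} K
      = integral {u..real (Suc (Suc q)) * L} K"
    using uq Lpos
    by (intro Henstock_Kurzweil_Integration.integral_combine per_integrable) auto
  have "integral {0 + of_int (int (Suc q)) * L..L + of_int (int (Suc q)) * L} K = integral {0..L} K"
    by (rule per_shift_int)
  then have "integral {real (Suc q) * L..real (Suc (Suc q)) * L} K = integral {0..L} K"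
    by (simp add: algebra_simps)
  moreover have "\<kappa>3 * L \<le> \<kappa>2 * L" using k32 Lpos by (intro mult_right_mono) auto
  moreover have "\<kappa>3 * (real (Suc (Suc q)) * L - u) = \<kappa>3 * (real (Suc q) * L - u) + \<kappa>3 * L"
    by (simp add: algebra_simps)
  ultimately show ?case using c Suc.IH[OF Suc.prems] B by linarith
qed

lemma per_window0:
  assumes "0 \<le> u" "u < L" "u \<le> v" "C \<ge> 0"
  shows "integral {u..v} K \<ge> \<kappa>3 * (v - u) - 2 * C"
proof (cases "v \<le> L")
  case True
  have "\<kappa>3 * (v - u) \<le> \<kappa>1 * (v - u)" using assms k31 by (intro mult_right_mono) auto
  then show ?thesis using A[of u v] assms True by simp
next
  case False
  define k where "k = nat (\<lceil>v / L\<rceil>) - 1"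
  have vL: "v / L > 1" using False Lpos by (simp add: field_simps)
  then have c2: "\<lceil>v / L\<rceil> \<ge> 2" by (simp add: le_ceiling_iff)
  then have n2: "nat \<lceil>v / L\<rceil> \<ge> 2" by linarith
  then have "real k = real (nat \<lceil>v / L\<rceil>) - 1" unfolding k_def by (simp add: of_nat_diff)
  also have "real (nat \<lceil>v / L\<rceil>) = of_int \<lceil>v / L\<rceil>" using c2 by simp
  finally have kk: "real k = of_int \<lceil>v / L\<rceil> - 1" "k \<ge> 1" unfolding k_def using n2 by auto
  have "of_int \<lceil>v / L\<rceil> < v / L + 1" using ceiling_correct[of "v/L"] by linarith
  then have "real k < v / L" by (simp add: kk(1))
  then have k1: "real k * L < v" using Lpos by (simp add: field_simps)
  have "v / L \<le> of_int \<lceil>v / L\<rceil>" by (rule le_of_int_ceiling)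
  then have "v / L \<le> real k + 1" by (simp add: kk(1))
  then have k2: "v \<le> real k * L + L" using Lpos by (simp add: field_simps)
  obtain q where q: "k = Suc q" using kk by (cases k) auto
  have Q: "integral {u..real k * L} K \<ge> \<kappa>3 * (real k * L - u) - C"
    using per_Q[of u q] assms q by simp
  have "1 * L \<le> real k * L" using kk(2) Lpos by (intro mult_right_mono) auto
  then have uk: "u \<le> real k * L" using assms by linarith
  have c: "integral {u..real k * L} K + integral {real k * L..v} K = integral {u..v} K"
    using uk k1 by (intro Henstock_Kurzweil_Integration.integral_combine per_integrable) auto
  have "integral {0 + of_int (int k) * L..(v - real k * L) + of_int (int k) * L} K = integral {0..v - real k * L} K"
    by (rule per_shift_int)
  then have sh: "integral {real k * L..v} K = integral {0..v - real k * L} K" by simp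
  have "integral {0..v - real k * L} K \<ge> \<kappa>1 * (v - real k * L - 0) - C"
    using k1 k2 by (intro A) auto
  moreover have "\<kappa>3 * (v - real k * L) \<le> \<kappa>1 * (v - real k * L)" using k1 k31 by (intro mult_right_mono) auto
  ultimately show ?thesis using c sh Q by (simp add: algebra_simps)
qed

lemma per_window:
  assumes "u \<le> v" "C \<ge> 0"
  shows "integral {u..v} K \<ge> \<kappa>3 * (v - u) - 2 * C"
proof -
  define p where "p = \<lfloor>u / L\<rfloor>"
  define u' where "u' = u - of_int p * L"
  define v' where "v' = v - of_int p * L"
  have "of_int p \<le> u / L" "u / L < of_int p + 1" unfolding p_def by linarith+
  then have u': "0 \<le> u'" "u' < L" unfolding u'_def using Lpos by (auto simp: field_simps)
  have "integral {u' + of_int p * L..v' + of_int p * L} K = integral {u'..v'} K" by (rule per_shift_int)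
  then have "integral {u..v} K = integral {u'..v'} K" unfolding u'_def v'_def by simp
  moreover have "integral {u'..v'} K \<ge> \<kappa>3 * (v' - u') - 2 * C"
    using u' assms unfolding v'_def u'_def by (intro per_window0) auto
  moreover have "v' - u' = v - u" unfolding u'_def v'_def by simp
  ultimately show ?thesis by simp
qed

end
end



lemma HK_to_L:
  fixes h :: "real \<Rightarrow> real"
  assumes "h integrable_on S" "\<And>x. x \<in> S \<Longrightarrow> h x \<ge> 0" "S \<in> sets lebesgue"
  shows "integrable (lebesgue_on S) h" "integral\<^sup>L (lebesgue_on S) h = integral S h"
proof -
  have "h absolutely_integrable_on S" using assms by (intro nonnegative_absolutely_integrable_1) auto
  then have "integrable lebesgue (\<lambda>x. indicator S x *\<^sub>R h x)" by (simp add: set_integrable_def)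
  then show i: "integrable (lebesgue_on S) h" using assms(3) by (simp add: integrable_restrict_space)
  show "integral\<^sup>L (lebesgue_on S) h = integral S h"
    using has_integral_integral_lebesgue_on[OF i assms(3)] by (simp add: integral_unique)
qed

lemma L_to_HK:
  fixes h :: "real \<Rightarrow> real"
  assumes "integrable (lebesgue_on S) h" "S \<in> sets lebesgue"
  shows "h integrable_on S" "integral\<^sup>L (lebesgue_on S) h = integral S h"
  using has_integral_integral_lebesgue_on[OF assms]
  by (auto simp: integral_unique integrable_on_def)

lemma transl_meas: "(\<lambda>x::real. x + c) \<in> lebesgue \<rightarrow>\<^sub>M lebesgue"
  using lebesgue_affine_measurable[of "\<lambda>_. 1::real" c] by (simp add: add.commute)

lemma shift_L2:
  fixes x0 :: "real \<Rightarrow> real"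
  assumes Lpos: "L > 0" and x0: "x0 \<in> L2_on L"
  shows "(\<lambda>\<omega>. per_ext L x0 (\<omega> - r)) \<in> borel_measurable (lebesgue_on {0..L})"
    "integrable (lebesgue_on {0..L}) (\<lambda>\<omega>. (per_ext L x0 (\<omega> - r))\<^sup>2)"
    "integral\<^sup>L (lebesgue_on {0..L}) (\<lambda>\<omega>. (per_ext L x0 (\<omega> - r))\<^sup>2)
       = integral\<^sup>L (lebesgue_on {0..L}) (\<lambda>\<omega>. (x0 \<omega>)\<^sup>2)"
proof -
  define p where "p = \<lfloor>r / L\<rfloor>"
  define r' where "r' = r - of_int p * L"
  have "of_int p \<le> r / L" "r / L < of_int p + 1" unfolding p_def by linarith+
  then have r': "0 \<le> r'" "r' < L" unfolding r'_def using Lpos by (auto simp: field_simps)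
  define x0' where "x0' y = (if y \<in> {0..L} then x0 y else 0)" for y
  define G where "G \<omega> = (if \<omega> \<le> r' then x0' (\<omega> + (L - r')) else x0' (\<omega> + (- r')))" for \<omega>
  have x0m: "x0 \<in> borel_measurable (lebesgue_on {0..L})" "integrable (lebesgue_on {0..L}) (\<lambda>\<omega>. (x0 \<omega>)\<^sup>2)"
    using x0 unfolding L2_on_def by auto
  have x0'm: "x0' \<in> borel_measurable lebesgue"
    unfolding x0'_def using x0m(1) by (subst borel_measurable_if) auto
  have Gg: "per_ext L x0 (\<omega> - r) = G \<omega>" if "\<omega> \<in> {0..L}" for \<omega>
  proof -
    have "per_ext L x0 (\<omega> - r) = per_ext L x0 ((\<omega> - r') + of_int (- p) * L)"
      unfolding r'_def by (simp add: algebra_simps)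
    also have "\<dots> = per_ext L x0 (\<omega> - r')" by (rule per_ext_periodic[OF Lpos])
    finally have e: "per_ext L x0 (\<omega> - r) = per_ext L x0 (\<omega> - r')" .
    show ?thesis
    proof (cases "\<omega> \<le> r'")
      case True
      have "per_ext L x0 (\<omega> - r') = per_ext L x0 ((\<omega> + (L - r')) + of_int (- 1) * L)"
        by (simp add: algebra_simps)
      also have "\<dots> = per_ext L x0 (\<omega> + (L - r'))" by (rule per_ext_periodic[OF Lpos])
      also have "\<dots> = x0 (\<omega> + (L - r'))" using that True r' by (intro per_ext_base[OF Lpos]) auto
      finally show ?thesis using e True that r' unfolding G_def x0'_def by auto
    next
      case False
      have "per_ext L x0 (\<omega> - r') = x0 (\<omega> - r')" using that False r' by (intro per_ext_base[OF Lpos]) auto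
      then show ?thesis using e False that r' unfolding G_def x0'_def by auto
    qed
  qed
  have Gm: "G \<in> borel_measurable lebesgue"
  proof -
    have "(\<lambda>\<omega>. x0' (\<omega> + (L - r'))) \<in> borel_measurable lebesgue"
      using measurable_comp[OF transl_meas x0'm] by (simp add: o_def)
    moreover have "(\<lambda>\<omega>. x0' (\<omega> + (- r'))) \<in> borel_measurable lebesgue"
      using measurable_comp[OF transl_meas[of "- r'"] x0'm] by (simp add: o_def)
    ultimately have "(\<lambda>\<omega>. if \<omega> \<in> {..r'} then x0' (\<omega> + (L - r')) else x0' (\<omega> + (- r'))) \<in> borel_measurable lebesgue"
    proof (rule measurable_If_set)
      show "{..r'} \<inter> space lebesgue \<in> sets lebesgue" by simp
    qed
    moreover have "G = (\<lambda>\<omega>. if \<omega> \<in> {..r'} then x0' (\<omega> + (L - r')) else x0' (\<omega> + (- r')))"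
      unfolding G_def by auto
    ultimately show ?thesis by simp
  qed
  show gm: "(\<lambda>\<omega>. per_ext L x0 (\<omega> - r)) \<in> borel_measurable (lebesgue_on {0..L})"
    using measurable_restrict_space1[OF Gm, of "{0..L}"] Gg
    by (subst measurable_lebesgue_cong[where g = G]) auto
  define h where "h y = (x0' y)\<^sup>2" for y
  have x0HK: "(\<lambda>\<omega>. (x0 \<omega>)\<^sup>2) integrable_on {0..L}"
    "integral\<^sup>L (lebesgue_on {0..L}) (\<lambda>\<omega>. (x0 \<omega>)\<^sup>2) = integral {0..L} (\<lambda>\<omega>. (x0 \<omega>)\<^sup>2)"
    using L_to_HK[OF x0m(2)] by auto
  have hint: "h integrable_on {0..L}"
    using x0HK(1) by (rule integrable_spike[where S = "{}"]) (auto simp: h_def x0'_def)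
  have hI: "integral {0..L} h = integral {0..L} (\<lambda>\<omega>. (x0 \<omega>)\<^sup>2)"
    by (rule integral_spike[where S = "{}"]) (auto simp: h_def x0'_def)
  have h1: "(\<lambda>\<omega>. h (\<omega> + (L - r'))) integrable_on {(L - r') - (L - r')..L - (L - r')}"
    using r' by (intro integrable_shift_real_ivl integrable_subinterval_real[OF hint]) auto
  have h1I: "integral {(L - r') - (L - r')..L - (L - r')} (\<lambda>\<omega>. h (\<omega> + (L - r'))) = integral {L - r'..L} h"
    by (rule integral_shift_real_ivl)
  have h2: "(\<lambda>\<omega>. h (\<omega> + (- r'))) integrable_on {0 - (- r')..(L - r') - (- r')}"
    using r' by (intro integrable_shift_real_ivl integrable_subinterval_real[OF hint]) auto
  have h2I: "integral {0 - (- r')..(L - r') - (- r')} (\<lambda>\<omega>. h (\<omega> + (- r'))) = integral {0..L - r'} h"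
    by (rule integral_shift_real_ivl)
  have G1: "\<And>\<omega>. \<omega> \<in> {0..r'} \<Longrightarrow> (G \<omega>)\<^sup>2 = h (\<omega> + (L - r'))" unfolding G_def h_def by auto
  have G2: "\<And>\<omega>. \<omega> \<in> {r'..L} - {r'} \<Longrightarrow> (G \<omega>)\<^sup>2 = h (\<omega> + (- r'))" unfolding G_def h_def by auto
  have h1': "(\<lambda>\<omega>. h (\<omega> + (L - r'))) integrable_on {0..r'}" using h1 by simp
  have h2': "(\<lambda>\<omega>. h (\<omega> + (- r'))) integrable_on {r'..L}" using h2 by simp
  have h1I': "integral {0..r'} (\<lambda>\<omega>. h (\<omega> + (L - r'))) = integral {L - r'..L} h" using h1I by simp
  have h2I': "integral {r'..L} (\<lambda>\<omega>. h (\<omega> + (- r'))) = integral {0..L - r'} h" using h2I by simp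
  have Gi1: "(\<lambda>\<omega>. (G \<omega>)\<^sup>2) integrable_on {0..r'}"
    by (rule integrable_spike[OF h1' negligible_empty]) (metis G1 Diff_empty)
  have Gi2: "(\<lambda>\<omega>. (G \<omega>)\<^sup>2) integrable_on {r'..L}"
    by (rule integrable_spike[OF h2' negligible_sing[of r']]) (metis G2)
  have "integral {0..r'} (\<lambda>\<omega>. h (\<omega> + (L - r'))) = integral {0..r'} (\<lambda>\<omega>. (G \<omega>)\<^sup>2)"
    by (rule integral_spike[OF negligible_empty]) (metis G1 Diff_empty)
  then have GI1: "integral {0..r'} (\<lambda>\<omega>. (G \<omega>)\<^sup>2) = integral {L - r'..L} h" using h1I' by simp
  have "integral {r'..L} (\<lambda>\<omega>. h (\<omega> + (- r'))) = integral {r'..L} (\<lambda>\<omega>. (G \<omega>)\<^sup>2)"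
    by (rule integral_spike[OF negligible_sing[of r']]) (metis G2)
  then have GI2: "integral {r'..L} (\<lambda>\<omega>. (G \<omega>)\<^sup>2) = integral {0..L - r'} h" using h2I' by simp
  have Gi: "(\<lambda>\<omega>. (G \<omega>)\<^sup>2) integrable_on {0..L}"
    using r' by (intro Henstock_Kurzweil_Integration.integrable_combine[OF _ _ Gi1 Gi2]) auto
  have "integral {0..L} (\<lambda>\<omega>. (G \<omega>)\<^sup>2) = integral {0..r'} (\<lambda>\<omega>. (G \<omega>)\<^sup>2) + integral {r'..L} (\<lambda>\<omega>. (G \<omega>)\<^sup>2)"
    using r' Gi by (intro Henstock_Kurzweil_Integration.integral_combine[symmetric]) auto
  also have "\<dots> = integral {0..L - r'} h + integral {L - r'..L} h" using GI1 GI2 by simp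
  also have "\<dots> = integral {0..L} h"
    using r' hint by (intro Henstock_Kurzweil_Integration.integral_combine) auto
  finally have GI: "integral {0..L} (\<lambda>\<omega>. (G \<omega>)\<^sup>2) = integral {0..L} (\<lambda>\<omega>. (x0 \<omega>)\<^sup>2)" using hI by simp
  have GL: "integrable (lebesgue_on {0..L}) (\<lambda>\<omega>. (G \<omega>)\<^sup>2)"
     "integral\<^sup>L (lebesgue_on {0..L}) (\<lambda>\<omega>. (G \<omega>)\<^sup>2) = integral {0..L} (\<lambda>\<omega>. (G \<omega>)\<^sup>2)"
    using HK_to_L[OF Gi] by auto
  have cong: "\<And>\<omega>. \<omega> \<in> space (lebesgue_on {0..L}) \<Longrightarrow> (per_ext L x0 (\<omega> - r))\<^sup>2 = (G \<omega>)\<^sup>2"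
    using Gg by simp
  show "integrable (lebesgue_on {0..L}) (\<lambda>\<omega>. (per_ext L x0 (\<omega> - r))\<^sup>2)"
  proof -
    have "integrable (lebesgue_on {0..L}) (\<lambda>\<omega>. (per_ext L x0 (\<omega> - r))\<^sup>2) = integrable (lebesgue_on {0..L}) (\<lambda>\<omega>. (G \<omega>)\<^sup>2)"
      by (rule Bochner_Integration.integrable_cong) (auto simp: Gg)
    then show ?thesis using GL(1) by simp
  qed
  show "integral\<^sup>L (lebesgue_on {0..L}) (\<lambda>\<omega>. (per_ext L x0 (\<omega> - r))\<^sup>2)
       = integral\<^sup>L (lebesgue_on {0..L}) (\<lambda>\<omega>. (x0 \<omega>)\<^sup>2)"
  proof -
    have "integral\<^sup>L (lebesgue_on {0..L}) (\<lambda>\<omega>. (per_ext L x0 (\<omega> - r))\<^sup>2) = integral\<^sup>L (lebesgue_on {0..L}) (\<lambda>\<omega>. (G \<omega>)\<^sup>2)"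
      by (rule Bochner_Integration.integral_cong) (auto simp: Gg)
    then show ?thesis using GL(2) GI x0HK(2) by simp
  qed
qed




context seqs begin

definition KL :: "real \<Rightarrow> real \<Rightarrow> real" where
  "KL L = per_ext L (\<lambda>y. if y \<in> {0..L} then kB a b kk y else 0)"

lemma KL_per: "L > 0 \<Longrightarrow> KL L (x + of_int p * L) = KL L x"
  unfolding KL_def by (rule per_ext_periodic)

lemma KL_nonneg: "KL L x \<ge> 0"
  unfolding KL_def per_ext_def using kB_nonneg by simp

lemma KL_base: "L > 0 \<Longrightarrow> 0 < x \<Longrightarrow> x \<le> L \<Longrightarrow> KL L x = kB a b kk x"
  unfolding KL_def by (subst per_ext_base) auto

lemma KL_int_sub:
  assumes "L > 0" "0 \<le> s" "s \<le> t" "t \<le> L"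
  shows "KL L integrable_on {s..t}" "integral {s..t} (KL L) = integral {s..t} (kB a b kk)"
proof -
  have eq: "\<And>x. x \<in> {s..t} - {0} \<Longrightarrow> KL L x = kB a b kk x"
    using assms by (intro KL_base) auto
  show "KL L integrable_on {s..t}"
    by (rule integrable_spike[OF kB_integrable negligible_sing[of 0]]) (metis eq)
  show "integral {s..t} (KL L) = integral {s..t} (kB a b kk)"
    by (rule integral_spike[OF negligible_sing[of 0]]) (metis eq)
qed

lemma KL_integrable: "L > 0 \<Longrightarrow> KL L integrable_on {x..y}"
  using per_integrable[of L "KL L"] KL_per KL_int_sub(1)[of L 0 L] by auto

lemma kB_int_kk1:
  assumes "L > 0"
  shows "integral {0..L} (kB a b kk) \<ge> kk 1 * min (b 1) L"
proof -
  obtain N where N: "N \<ge> 1" "a N > L" using exists_big by blast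
  then have NL: "L < a (Suc N)" using a_step[of N] by simp
  have "integral {0..L} (kB a b kk) = (\<Sum>j=1..N. kk j * ov (a j) (b j) 0 L)" using kB_int(1)[OF NL] .
  also have "\<dots> \<ge> kk 1 * ov (a 1) (b 1) 0 L"
    using N kk_pos by (intro member_le_sum) (auto simp: ov_def less_imp_le)
  finally show ?thesis using a1 assms ab[of 1] unfolding ov_def by auto
qed

end



context seqs begin

lemma ii_to_i:
  fixes c \<kappa> M :: real
  assumes cpos: "c > 0" and kpos: "\<kappa> > 0" and Mpos: "M > 0"
    and cond: "\<forall>n m. 1 \<le> m \<and> m \<le> n \<longrightarrow> \<kappa> * (a n - b m) - (\<Sum>j\<in>{m+1..n-1}. kk j * (b j - a j)) \<le> M"
  shows "\<exists>M' k'. M' > 0 \<and> k' > 0 \<and>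
            (\<forall>L>0. \<forall>t\<ge>0. \<forall>x0 \<in> L2_on L.
               Tsg c (kB a b kk) L t x0 \<in> L2_on L \<and>
               L2_norm_on L (Tsg c (kB a b kk) L t x0) \<le> M' * exp (- k' * t) * L2_norm_on L x0)"
proof -
  define C where "C = Clow \<kappa> M"
  have C0: "C0 \<kappa> M \<ge> 0" using C0_nonneg[OF kpos Mpos cond] .
  have Cdef: "C = 2 * C0 \<kappa> M + 2 * M" unfolding C_def using Clow_def[OF kpos Mpos cond] .
  have Cpos: "C > 0" using C0 Mpos Cdef by simp
  have low: "\<And>s t. 0 \<le> s \<Longrightarrow> s \<le> t \<Longrightarrow> integral {s..t} (kB a b kk) \<ge> \<kappa> * (t - s) - C"
    unfolding C_def using kB_int_lower[OF kpos Mpos cond] by blast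
  define \<kappa>2 where "\<kappa>2 = min (\<kappa> / 2) (min (kk 1) (kk 1 * b 1 * \<kappa> / (2 * C)))"
  have kk1: "kk 1 > 0" using kk_pos by simp
  have b1: "b 1 > 0" using ab[of 1] a1 by simp
  have k2pos: "\<kappa>2 > 0" unfolding \<kappa>2_def using kpos kk1 b1 Cpos by simp
  have k2k: "\<kappa>2 \<le> \<kappa>" unfolding \<kappa>2_def using kpos by simp
  have B: "integral {0..L} (kB a b kk) \<ge> \<kappa>2 * L" if L: "L > 0" for L
  proof (cases "L \<ge> 2 * C / \<kappa>")
    case True
    then have "C \<le> \<kappa> * L / 2" using kpos by (simp add: field_simps)
    moreover have "\<kappa>2 \<le> \<kappa> / 2" unfolding \<kappa>2_def by simp
    then have "\<kappa>2 * L \<le> (\<kappa> / 2) * L" using L by (intro mult_right_mono) auto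
    moreover have "(\<kappa> / 2) * L = \<kappa> * L / 2" by simp
    moreover have "integral {0..L} (kB a b kk) \<ge> \<kappa> * L - C" using low[of 0 L] L by simp
    ultimately show ?thesis by linarith
  next
    case False
    then have Lk: "L * \<kappa> < 2 * C" using kpos by (simp add: field_simps)
    have I: "integral {0..L} (kB a b kk) \<ge> kk 1 * min (b 1) L" using kB_int_kk1[OF L] .
    show ?thesis
    proof (cases "L \<le> b 1")
      case True
      have "\<kappa>2 * L \<le> kk 1 * L" unfolding \<kappa>2_def using L by (intro mult_right_mono) auto
      then show ?thesis using I True by simp
    next
      case False
      have "\<kappa>2 * L \<le> (kk 1 * b 1 * \<kappa> / (2 * C)) * L" unfolding \<kappa>2_def using L by (intro mult_right_mono) auto
      also have "\<dots> = kk 1 * b 1 * (L * \<kappa> / (2 * C))" by simp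
      also have "\<dots> \<le> kk 1 * b 1 * 1"
        using Lk Cpos kk1 b1 by (intro mult_left_mono) (auto simp: field_simps)
      finally show ?thesis using I False by simp
    qed
  qed
  define M' where "M' = exp (2 * C / c)"
  have win: "integral {u..v} (KL L) \<ge> \<kappa>2 * (v - u) - 2 * C" if L: "L > 0" and uv: "u \<le> v" for L u v
  proof (rule per_window[where K = "KL L" and L = L and ?\<kappa>1.0 = \<kappa> and ?\<kappa>2.0 = \<kappa>2 and ?\<kappa>3.0 = \<kappa>2])
    show "0 < L" by fact
    show "\<And>x p. KL L (x + real_of_int p * L) = KL L x" using KL_per L by blast
    show "KL L integrable_on {0..L}" using KL_integrable L by blast
    show "\<kappa> * (t - s) - C \<le> integral {s..t} (KL L)" if "0 \<le> s" "s \<le> t" "t \<le> L" for s t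
      using KL_int_sub(2)[OF L that] low[OF that(1,2)] by simp
    show "\<kappa>2 * L \<le> integral {0..L} (KL L)" using KL_int_sub(2)[OF L, of 0 L] B[OF L] L by simp
  qed (use k2k uv Cpos in auto)
  show ?thesis
  proof (intro exI conjI allI impI ballI)
    show "M' > 0" unfolding M'_def by simp
    show "\<kappa>2 > 0" by fact
    fix L t :: real and x0 assume L: "L > 0" and t: "t \<ge> 0" and x0: "x0 \<in> L2_on L"
    define E where "E \<omega> = exp (- (1 / c) * integral {\<omega> - c * t..\<omega>} (KL L))" for \<omega>
    define g where "g \<omega> = per_ext L x0 (\<omega> - c * t)" for \<omega>
    define B where "B = M' * exp (- \<kappa>2 * t)"
    have Bpos: "B > 0" unfolding B_def M'_def by simp
    have Tsg_eq: "Tsg c (kB a b kk) L t x0 = (\<lambda>\<omega>. E \<omega> * g \<omega>)"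
      unfolding Tsg_def E_def g_def KL_def by (simp add: fun_eq_iff)
    have Ebd: "0 < E \<omega> \<and> E \<omega> \<le> B" for \<omega>
    proof -
      have ct: "0 \<le> c * t" using cpos t by simp
      have "integral {\<omega> - c * t..\<omega>} (KL L) \<ge> \<kappa>2 * (c * t) - 2 * C" using win[OF L, of "\<omega> - c * t" \<omega>] ct by simp
      then have "- (1 / c) * integral {\<omega> - c * t..\<omega>} (KL L) \<le> - (1 / c) * (\<kappa>2 * (c * t) - 2 * C)"
        using cpos by (intro mult_left_mono_neg) auto
      also have "\<dots> = 2 * C / c + (- \<kappa>2 * t)" using cpos by (simp add: field_simps)
      finally have le: "- (1 / c) * integral {\<omega> - c * t..\<omega>} (KL L) \<le> 2 * C / c + (- \<kappa>2 * t)" .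
      have "E \<omega> \<le> exp (2 * C / c + (- \<kappa>2 * t))" unfolding E_def using le by (simp only: exp_le_cancel_iff)
      also have "exp (2 * C / c + (- \<kappa>2 * t)) = B" unfolding B_def M'_def by (simp only: exp_add)
      finally show ?thesis unfolding E_def by simp
    qed
    have Ecnt: "continuous_on {0..L} E"
    proof -
      define A where "A = - c * t - 1"
      define F where "F x = integral {A..x} (KL L)" for x
      have Fc: "continuous_on {A..L + 1} F"
        unfolding F_def by (rule indefinite_integral_continuous_1) (rule KL_integrable[OF L])
      have eqI: "integral {\<omega> - c * t..\<omega>} (KL L) = F \<omega> - F (\<omega> - c * t)" if "\<omega> \<in> {0..L}" for \<omega>
      proof -
        have "integral {A..\<omega> - c * t} (KL L) + integral {\<omega> - c * t..\<omega>} (KL L) = integral {A..\<omega>} (KL L)"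
          using that cpos t unfolding A_def
          by (intro Henstock_Kurzweil_Integration.integral_combine KL_integrable[OF L]) auto
        then show ?thesis unfolding F_def by simp
      qed
      have ct0: "0 \<le> c * t" using cpos t by simp
      have c1: "continuous_on {0..L} F" using Fc by (rule continuous_on_subset) (use ct0 in \<open>auto simp: A_def\<close>)
      have c2: "continuous_on {0..L} (\<lambda>\<omega>. F (\<omega> - c * t))"
      proof (rule continuous_on_compose2[OF Fc])
        show "continuous_on {0..L} (\<lambda>\<omega>. \<omega> - c * t)" by (intro continuous_intros)
        show "(\<lambda>\<omega>. \<omega> - c * t) ` {0..L} \<subseteq> {A..L + 1}" using ct0 unfolding A_def by auto
      qed
      have "continuous_on {0..L} (\<lambda>\<omega>. exp (- (1 / c) * (F \<omega> - F (\<omega> - c * t))))"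
        by (intro continuous_intros c1 c2)
      then show ?thesis unfolding E_def by (rule continuous_on_cong[THEN iffD1, rotated 2]) (auto simp: eqI)
    qed
    have Em: "E \<in> borel_measurable (lebesgue_on {0..L})"
      by (rule continuous_imp_measurable_on_sets_lebesgue[OF Ecnt]) simp
    have gm: "g \<in> borel_measurable (lebesgue_on {0..L})"
      unfolding g_def by (rule shift_L2(1)[OF L x0])
    have g2: "integrable (lebesgue_on {0..L}) (\<lambda>\<omega>. (g \<omega>)\<^sup>2)"
      unfolding g_def by (rule shift_L2(2)[OF L x0])
    have g2I: "integral\<^sup>L (lebesgue_on {0..L}) (\<lambda>\<omega>. (g \<omega>)\<^sup>2) = integral\<^sup>L (lebesgue_on {0..L}) (\<lambda>\<omega>. (x0 \<omega>)\<^sup>2)"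
      unfolding g_def by (rule shift_L2(3)[OF L x0])
    have Tm: "(\<lambda>\<omega>. E \<omega> * g \<omega>) \<in> borel_measurable (lebesgue_on {0..L})"
      using Em gm by (rule borel_measurable_times)
    have T2m: "(\<lambda>\<omega>. (E \<omega> * g \<omega>)\<^sup>2) \<in> borel_measurable (lebesgue_on {0..L})"
      using Tm by (rule borel_measurable_power)
    have ptw: "(E \<omega> * g \<omega>)\<^sup>2 \<le> B\<^sup>2 * (g \<omega>)\<^sup>2" for \<omega>
    proof -
      have "(E \<omega>)\<^sup>2 \<le> B\<^sup>2" using Ebd[of \<omega>] by (intro power_mono) auto
      then show ?thesis by (simp add: power_mult_distrib mult_right_mono)
    qed
    have Bg: "integrable (lebesgue_on {0..L}) (\<lambda>\<omega>. B\<^sup>2 * (g \<omega>)\<^sup>2)" using g2 by simp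
    have T2i: "integrable (lebesgue_on {0..L}) (\<lambda>\<omega>. (E \<omega> * g \<omega>)\<^sup>2)"
    proof (rule Bochner_Integration.integrable_bound[OF Bg T2m])
      show "AE x in lebesgue_on {0..L}. norm ((E x * g x)\<^sup>2) \<le> norm (B\<^sup>2 * (g x)\<^sup>2)"
        using ptw by (intro AE_I2) simp
    qed
    have Ile: "integral\<^sup>L (lebesgue_on {0..L}) (\<lambda>\<omega>. (E \<omega> * g \<omega>)\<^sup>2) \<le> B\<^sup>2 * integral\<^sup>L (lebesgue_on {0..L}) (\<lambda>\<omega>. (x0 \<omega>)\<^sup>2)"
    proof -
      have "integral\<^sup>L (lebesgue_on {0..L}) (\<lambda>\<omega>. (E \<omega> * g \<omega>)\<^sup>2) \<le> integral\<^sup>L (lebesgue_on {0..L}) (\<lambda>\<omega>. B\<^sup>2 * (g \<omega>)\<^sup>2)"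
        using T2i Bg ptw by (intro integral_mono) auto
      also have "\<dots> = B\<^sup>2 * integral\<^sup>L (lebesgue_on {0..L}) (\<lambda>\<omega>. (g \<omega>)\<^sup>2)" by simp
      finally show ?thesis using g2I by simp
    qed
    show "Tsg c (kB a b kk) L t x0 \<in> L2_on L"
      unfolding Tsg_eq L2_on_def using Tm T2i by simp
    have x0nn: "integral\<^sup>L (lebesgue_on {0..L}) (\<lambda>\<omega>. (x0 \<omega>)\<^sup>2) \<ge> 0" by simp
    have "L2_norm_on L (Tsg c (kB a b kk) L t x0) = sqrt (integral\<^sup>L (lebesgue_on {0..L}) (\<lambda>\<omega>. (E \<omega> * g \<omega>)\<^sup>2))"
      unfolding Tsg_eq L2_norm_on_def by simp
    also have "\<dots> \<le> sqrt (B\<^sup>2 * integral\<^sup>L (lebesgue_on {0..L}) (\<lambda>\<omega>. (x0 \<omega>)\<^sup>2))"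
      using Ile by simp
    also have "\<dots> = B * L2_norm_on L x0"
      unfolding L2_norm_on_def using Bpos by (simp add: real_sqrt_mult)
    finally show "L2_norm_on L (Tsg c (kB a b kk) L t x0) \<le> M' * exp (- \<kappa>2 * t) * L2_norm_on L x0"
      unfolding B_def .
  qed
qed

end



context seqs begin

lemma i_to_ii:
  fixes c M' k' :: real
  assumes cpos: "c > 0" and M'pos: "M' > 0" and k'pos: "k' > 0"
    and H: "\<forall>L>0. \<forall>t\<ge>0. \<forall>x0 \<in> L2_on L.
               Tsg c (kB a b kk) L t x0 \<in> L2_on L \<and>
               L2_norm_on L (Tsg c (kB a b kk) L t x0) \<le> M' * exp (- k' * t) * L2_norm_on L x0"
  shows "\<exists>M \<kappa>. M > 0 \<and> \<kappa> > 0 \<and>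
            (\<forall>n m. 1 \<le> m \<and> m \<le> n \<longrightarrow>
               \<kappa> * (a n - b m) - (\<Sum>j\<in>{m+1..n-1}. kk j * (b j - a j)) \<le> M)"
proof (intro exI conjI allI impI)
  show "\<bar>c * ln M'\<bar> + 1 > 0" by simp
  show "k' > 0" by fact
  fix n m :: nat assume nm: "1 \<le> m \<and> m \<le> n"
  define S where "S = (\<Sum>j\<in>{m+1..n-1}. kk j * (b j - a j))"
  show "k' * (a n - b m) - (\<Sum>j\<in>{m+1..n-1}. kk j * (b j - a j)) \<le> \<bar>c * ln M'\<bar> + 1"
  proof (cases "m = n")
    case True
    then have "{m+1..n-1} = {}" by auto
    moreover have "a n - b m < 0" using True ab nm by simp
    moreover have "k' * (a n - b m) < 0" using calculation(2) k'pos by (simp add: mult_pos_neg)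
    moreover have "\<bar>c * ln M'\<bar> \<ge> 0" by simp
    ultimately show ?thesis by simp
  next
    case False
    then have m1: "1 \<le> m" and mn: "m < n" using nm by auto
    define \<delta> where "\<delta> = min ((b m - a m) / 2) (1 / (kk m + 1))"
    have kkm: "kk m > 0" using kk_pos m1 by simp
    have dpos: "\<delta> > 0" unfolding \<delta>_def using ab[OF m1] kkm by simp
    have dlt: "\<delta> < b m - a m"
    proof -
      have "\<delta> \<le> (b m - a m) / 2" unfolding \<delta>_def by (rule min.cobounded1)
      moreover have "(b m - a m) / 2 < b m - a m" using ab[OF m1] by simp
      ultimately show ?thesis by (rule order_le_less_trans)
    qed
    then have dle: "\<delta> \<le> b m - a m" by simp
    have kd: "kk m * \<delta> \<le> 1"
    proof -
      have "kk m * \<delta> \<le> kk m * (1 / (kk m + 1))" unfolding \<delta>_def using kkm by (intro mult_left_mono) auto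
      also have "\<dots> \<le> 1" using kkm by (simp add: field_simps)
      finally show ?thesis .
    qed
    have am0: "a m \<ge> 0" using a_nonneg m1 by simp
    have bman: "b m \<le> a n" using b_le_a m1 mn by simp
    have an0: "a n \<ge> 0" using a_nonneg m1 mn by simp
    define L where "L = a n + 1"
    have L: "L > 0" unfolding L_def using an0 by simp
    define r where "r = a n - b m"
    have r0: "r \<ge> 0" unfolding r_def using bman by simp
    define t where "t = r / c"
    have t0: "t \<ge> 0" unfolding t_def using r0 cpos by simp
    have ct: "c * t = r" unfolding t_def using cpos by simp
    define x0 where "x0 = (indicator {b m - \<delta>..b m} :: real \<Rightarrow> real)"
    define X where "X = kk m * \<delta> + S"
    have sq: "(x0 y)\<^sup>2 = x0 y" for y unfolding x0_def by (simp add: indicator_def)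
    have x0HK: "(x0 has_integral \<delta>) {0..L}"
    proof -
      have "(x0 has_integral ov (b m - \<delta>) (b m) 0 L) {0..L}" unfolding x0_def by (rule ind_has_int)
      moreover have "ov (b m - \<delta>) (b m) 0 L = \<delta>"
        unfolding ov_def L_def using dle am0 bman dpos by auto
      ultimately show ?thesis by simp
    qed
    have x0nn: "\<And>y. x0 y \<ge> 0" unfolding x0_def by simp
    have x0L: "integrable (lebesgue_on {0..L}) x0" "integral\<^sup>L (lebesgue_on {0..L}) x0 = \<delta>"
      using HK_to_L[of x0 "{0..L}"] x0HK x0nn by (auto simp: integral_unique integrable_on_def)
    have x0m: "x0 \<in> borel_measurable (lebesgue_on {0..L})"
      using x0L(1) by (rule borel_measurable_integrable)
    have x0in: "x0 \<in> L2_on L" unfolding L2_on_def using x0m x0L(1) by (simp add: sq)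
    have nx0: "L2_norm_on L x0 = sqrt \<delta>" unfolding L2_norm_on_def using x0L(2) by (simp add: sq)
    define T where "T = Tsg c (kB a b kk) L t x0"
    have HT: "T \<in> L2_on L" "L2_norm_on L T \<le> M' * exp (- k' * t) * sqrt \<delta>"
    proof -
      have "T \<in> L2_on L \<and> L2_norm_on L T \<le> M' * exp (- k' * t) * L2_norm_on L x0"
        using H L t0 x0in unfolding T_def by blast
      then show "T \<in> L2_on L" "L2_norm_on L T \<le> M' * exp (- k' * t) * sqrt \<delta>" using nx0 by auto
    qed
    have T2: "integrable (lebesgue_on {0..L}) (\<lambda>\<omega>. (T \<omega>)\<^sup>2)" using HT(1) unfolding L2_on_def by simp
    have T2HK: "(\<lambda>\<omega>. (T \<omega>)\<^sup>2) integrable_on {0..L}"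
      "integral\<^sup>L (lebesgue_on {0..L}) (\<lambda>\<omega>. (T \<omega>)\<^sup>2) = integral {0..L} (\<lambda>\<omega>. (T \<omega>)\<^sup>2)"
      using L_to_HK[OF T2] by auto
    have ptw: "(T \<omega>)\<^sup>2 \<ge> exp (- X / c) ^ 2" if w: "\<omega> \<in> {a n - \<delta>..a n}" for \<omega>
    proof -
      have w1: "b m - \<delta> \<le> \<omega> - r" "\<omega> - r \<le> b m" using w unfolding r_def by auto
      have xv: "per_ext L x0 (\<omega> - c * t) = 1"
      proof -
        have "per_ext L x0 (\<omega> - r) = x0 (\<omega> - r)"
          using w1 dlt am0 bman dpos unfolding L_def by (intro per_ext_base) auto
        then show ?thesis using w1 unfolding ct x0_def by simp
      qed
      have Kint: "\<And>x y. KL L integrable_on {x..y}" using KL_integrable[OF L] .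
      have "integral {\<omega> - r..\<omega>} (KL L) \<le> integral {b m - \<delta>..a n} (KL L)"
      proof -
        have e1: "integral {b m - \<delta>..\<omega> - r} (KL L) + integral {\<omega> - r..a n} (KL L) = integral {b m - \<delta>..a n} (KL L)"
          using w1 w r0 by (intro Henstock_Kurzweil_Integration.integral_combine Kint) auto
        have e2: "integral {\<omega> - r..\<omega>} (KL L) + integral {\<omega>..a n} (KL L) = integral {\<omega> - r..a n} (KL L)"
          using w1 w r0 by (intro Henstock_Kurzweil_Integration.integral_combine Kint) auto
        have "integral {b m - \<delta>..\<omega> - r} (KL L) \<ge> 0" "integral {\<omega>..a n} (KL L) \<ge> 0"
          by (intro integral_nonneg Kint KL_nonneg)+
        then show ?thesis using e1 e2 by linarith
      qed
      also have "integral {b m - \<delta>..a n} (KL L) = integral {b m - \<delta>..a n} (kB a b kk)"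
        using dle am0 bman dpos unfolding L_def by (intro KL_int_sub(2)) auto
      also have "\<dots> = X" unfolding X_def S_def using kB_int_upper[OF m1 mn dpos dle] .
      finally have IX: "integral {\<omega> - r..\<omega>} (KL L) \<le> X" .
      have "- X / c \<le> - (1 / c) * integral {\<omega> - r..\<omega>} (KL L)"
        using IX cpos by (simp add: field_simps)
      then have Ege: "exp (- X / c) \<le> exp (- (1 / c) * integral {\<omega> - c * t..\<omega>} (KL L))"
        unfolding ct by simp
      have "T \<omega> = exp (- (1 / c) * integral {\<omega> - c * t..\<omega>} (KL L))"
        unfolding T_def Tsg_def KL_def using xv by simp
      then show ?thesis using Ege by (simp add: power_mono)
    qed
    have sub: "{a n - \<delta>..a n} \<subseteq> {0..L}" using dle am0 bman dpos unfolding L_def by auto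
    have "\<delta> * exp (- X / c) ^ 2 = integral {a n - \<delta>..a n} (\<lambda>_. exp (- X / c) ^ 2)"
      using dpos by simp
    also have "\<dots> \<le> integral {a n - \<delta>..a n} (\<lambda>\<omega>. (T \<omega>)\<^sup>2)"
      using ptw by (intro integral_le integrable_subinterval_real[OF T2HK(1) sub]) auto
    also have "\<dots> \<le> integral {0..L} (\<lambda>\<omega>. (T \<omega>)\<^sup>2)"
      using sub by (intro integral_subset_le integrable_subinterval_real[OF T2HK(1) sub] T2HK(1)) auto
    also have "\<dots> = integral\<^sup>L (lebesgue_on {0..L}) (\<lambda>\<omega>. (T \<omega>)\<^sup>2)" using T2HK(2) by simp
    also have "\<dots> \<le> (M' * exp (- k' * t))\<^sup>2 * \<delta>"
    proof -
      have "sqrt (integral\<^sup>L (lebesgue_on {0..L}) (\<lambda>\<omega>. (T \<omega>)\<^sup>2)) \<le> M' * exp (- k' * t) * sqrt \<delta>"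
        using HT(2) unfolding L2_norm_on_def .
      also have "\<dots> = sqrt ((M' * exp (- k' * t))\<^sup>2 * \<delta>)"
        using M'pos by (simp add: real_sqrt_mult)
      finally show ?thesis by simp
    qed
    finally have fin: "\<delta> * exp (- X / c) ^ 2 \<le> (M' * exp (- k' * t))\<^sup>2 * \<delta>" .
    have fin': "exp (- X / c) ^ 2 * \<delta> \<le> (M' * exp (- k' * t))\<^sup>2 * \<delta>"
      by (subst mult.commute) (rule fin)
    have "exp (- X / c) ^ 2 \<le> (M' * exp (- k' * t))\<^sup>2"
      by (rule mult_right_le_imp_le[OF fin' dpos])
    then have e1: "exp (- X / c) \<le> M' * exp (- k' * t)"
      by (rule power2_le_imp_le) (use M'pos in simp)
    have p1: "0 < exp (- X / c)" by simp
    have p2: "0 < M' * exp (- k' * t)" using M'pos by simp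
    have "ln (exp (- X / c)) \<le> ln (M' * exp (- k' * t))"
      using ln_le_cancel_iff[OF p1 p2] e1 by blast
    then have "- X / c \<le> ln M' - k' * t" using M'pos by (simp add: ln_mult)
    then have "- X \<le> c * ln M' - k' * (c * t)" using cpos by (simp add: field_simps)
    then have "k' * r - S \<le> c * ln M' + kk m * \<delta>" unfolding ct X_def by simp
    then have "k' * r - S \<le> \<bar>c * ln M'\<bar> + 1" using kd by linarith
    then show ?thesis unfolding r_def S_def .
  qed
qed

end

theorem mainTheorem9:
  fixes c :: real and a b kk :: "nat \<Rightarrow> real"
  assumes c_pos: "c > 0"
    and a1: "a 1 = 0"
    and ab: "\<And>j. j \<ge> 1 \<Longrightarrow> a j < b j"
    and ba: "\<And>j. j \<ge> 1 \<Longrightarrow> b j \<le> a (Suc j)"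
    and a_unbdd: "\<not> bdd_above {a j | j. j \<ge> 1}"
    and kk_pos: "\<And>j. j \<ge> 1 \<Longrightarrow> kk j > 0"
    and kk_bdd: "bdd_above {kk j | j. j \<ge> 1}"
  shows "(\<exists>M' k'. M' > 0 \<and> k' > 0 \<and>
            (\<forall>L>0. \<forall>t\<ge>0. \<forall>x0 \<in> L2_on L.
               Tsg c (kB a b kk) L t x0 \<in> L2_on L \<and>
               L2_norm_on L (Tsg c (kB a b kk) L t x0) \<le> M' * exp (- k' * t) * L2_norm_on L x0))
     \<longleftrightarrow>
     (\<exists>M \<kappa>. M > 0 \<and> \<kappa> > 0 \<and>
            (\<forall>n m. 1 \<le> m \<and> m \<le> n \<longrightarrow>
               \<kappa> * (a n - b m) - (\<Sum>j\<in>{m+1..n-1}. kk j * (b j - a j)) \<le> M))"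
proof -
  interpret S: seqs a b kk using a1 ab ba a_unbdd kk_pos by unfold_locales auto
  show ?thesis
  proof
    assume "\<exists>M' k'. M' > 0 \<and> k' > 0 \<and>
            (\<forall>L>0. \<forall>t\<ge>0. \<forall>x0 \<in> L2_on L.
               Tsg c (kB a b kk) L t x0 \<in> L2_on L \<and>
               L2_norm_on L (Tsg c (kB a b kk) L t x0) \<le> M' * exp (- k' * t) * L2_norm_on L x0)"
    then obtain M' k' where "M' > 0" "k' > 0" "\<forall>L>0. \<forall>t\<ge>0. \<forall>x0 \<in> L2_on L.
               Tsg c (kB a b kk) L t x0 \<in> L2_on L \<and>
               L2_norm_on L (Tsg c (kB a b kk) L t x0) \<le> M' * exp (- k' * t) * L2_norm_on L x0"
      by blast
    then show "\<exists>M \<kappa>. M > 0 \<and> \<kappa> > 0 \<and>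
            (\<forall>n m. 1 \<le> m \<and> m \<le> n \<longrightarrow>
               \<kappa> * (a n - b m) - (\<Sum>j\<in>{m+1..n-1}. kk j * (b j - a j)) \<le> M)"
      using S.i_to_ii[OF c_pos] by blast
  next
    assume "\<exists>M \<kappa>. M > 0 \<and> \<kappa> > 0 \<and>
            (\<forall>n m. 1 \<le> m \<and> m \<le> n \<longrightarrow>
               \<kappa> * (a n - b m) - (\<Sum>j\<in>{m+1..n-1}. kk j * (b j - a j)) \<le> M)"
    then obtain M \<kappa> where "M > 0" "\<kappa> > 0" "\<forall>n m. 1 \<le> m \<and> m \<le> n \<longrightarrow>
               \<kappa> * (a n - b m) - (\<Sum>j\<in>{m+1..n-1}. kk j * (b j - a j)) \<le> M"
      by blast
    then show "\<exists>M' k'. M' > 0 \<and> k' > 0 \<and>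
            (\<forall>L>0. \<forall>t\<ge>0. \<forall>x0 \<in> L2_on L.
               Tsg c (kB a b kk) L t x0 \<in> L2_on L \<and>
               L2_norm_on L (Tsg c (kB a b kk) L t x0) \<le> M' * exp (- k' * t) * L2_norm_on L x0)"
      using S.ii_to_i[OF c_pos] by blast
  qed
qed

end
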